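(* For each $i\in\{1,\dots,n\}$ let a linear basis warp be given by a feature map $\beta_i:\mathbb{R}^d\to\mathbb{R}^{l_i}$, a regularization matrix $Z_i\in\mathbb{R}^{k_i\times l_i}$ and a weight $\mu_i\ge0$, and let $D_i\in\mathbb{R}^{d\times m}$ be a datum shape with $\mathcal{B}_i=\mathcal{B}_i(D_i)$, such that $M_i=\mathcal{B}_i\mathcal{B}_i^{\top}+\mu_iZ_i^{\top}Z_i$ is invertible. Suppose each of these warps contains free-translations. Then, with $Q_i=\mathcal{B}_i^{\top}M_i^{-1}\mathcal{B}_i$, $\mathcal{Q}_{II}=\sum_iQ_i$ and $\mathcal{P}_{II}=nI_m-\mathcal{Q}_{II}$, all of the following hold: $\mathcal{P}_{II}\mathbf{1}=0$; $\mathcal{Q}_{II}\mathbf{1}=n\mathbf{1}$; $Q_i\mathbf{1}=\mathbf{1}$ for all $i$; $\mathrm{tr}((S+t\mathbf{1}^{\top})\mathcal{P}_{II}(S+t\mathbf{1}^{\top})^{\top})=\mathrm{tr}(S\mathcal{P}_{II}S^{\top})$ for all $S\in\mathbb{R}^{d\times m}$, $t\in\mathbb{R}^d$; and for every $i$ there is $x_i$ with $\mathcal{B}_i^{\top}x_i=\mathbf{1}$ and, if $\mu_i>0$, $Z_ix_i=0$.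
   Context: A linear basis warp (LBW) with feature map $\beta:\mathbb{R}^d\to\mathbb{R}^l$ is the map $p\mapsto W^{\top}\beta(p)$ with parameter $W\in\mathbb{R}^{l\times d}$, regularized by $\mu\|ZW\|_F^2$. For a point cloud $D=[p_1,\dots,p_m]\in\mathbb{R}^{d\times m}$, $\mathcal{B}(D)=[\beta(p_1),\dots,\beta(p_m)]\in\mathbb{R}^{l\times m}$. The LBW $(\beta,Z,\mu)$ contains free-translations if there exists $x\in\mathbb{R}^l$, independent of the input, with $\beta(p)^{\top}x=1$ for all $p\in\mathbb{R}^d$ (i.e. $\mathcal{B}(D)^{\top}x=\mathbf{1}$ for every point cloud $D$), and, if $\mu>0$, additionally $Zx=0$. $\mathbf{1}$ denotes the all-ones vector. *)

theory Defs
  imports "Jordan_Normal_Form.Matrix"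
begin

definition mat_trace :: "real mat \<Rightarrow> real" where
  "mat_trace A = (\<Sum>i<dim_row A. A $$ (i, i))"

definition mat_inv :: "real mat \<Rightarrow> real mat" where
  "mat_inv A = (SOME B. inverts_mat A B \<and> inverts_mat B A)"

definition ones_vec :: "nat \<Rightarrow> real vec" where
  "ones_vec m = vec m (\<lambda>_. 1)"

definition basis_mat :: "nat \<Rightarrow> (real vec \<Rightarrow> real vec) \<Rightarrow> real mat \<Rightarrow> real mat" where
  "basis_mat l \<beta> D = mat l (dim_col D) (\<lambda>(r, c). \<beta> (col D c) $ r)"

definition contains_free_translations ::
  "nat \<Rightarrow> nat \<Rightarrow> nat \<Rightarrow> (real vec \<Rightarrow> real vec) \<Rightarrow> real mat \<Rightarrow> real \<Rightarrow> bool" where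
  "contains_free_translations d l k \<beta> Z \<mu> \<longleftrightarrow>
     (\<exists>x \<in> carrier_vec l. (\<forall>p \<in> carrier_vec d. \<beta> p \<bullet> x = 1) \<and>
        (\<mu> > 0 \<longrightarrow> Z *\<^sub>v x = 0\<^sub>v k))"

end

theory Submission imports Defs begin

lemma inv_props:
  assumes "M \<in> carrier_mat l l" "invertible_mat M"
  shows "mat_inv M \<in> carrier_mat l l" "mat_inv M * M = 1\<^sub>m l" "M * mat_inv M = 1\<^sub>m l"
proof -
  have ex: "\<exists>B. inverts_mat M B \<and> inverts_mat B M" using assms(2) unfolding invertible_mat_def by blast
  have h: "inverts_mat M (mat_inv M) \<and> inverts_mat (mat_inv M) M"
    unfolding mat_inv_def by (rule someI_ex[OF ex])
  hence a: "M * mat_inv M = 1\<^sub>m l" and b: "mat_inv M * M = 1\<^sub>m (dim_row (mat_inv M))"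
    using assms(1) unfolding inverts_mat_def by auto
  have c: "dim_col (mat_inv M) = l" using a by (metis index_mult_mat(3) index_one_mat(3))
  have r: "dim_row (mat_inv M) = l" using b assms(1) by (metis carrier_matD(2) index_mult_mat(3) index_one_mat(3))
  show "mat_inv M \<in> carrier_mat l l" using c r by auto
  show "mat_inv M * M = 1\<^sub>m l" using b r by simp
  show "M * mat_inv M = 1\<^sub>m l" using a .
qed

lemma transpose_smult_mat: "(c \<cdot>\<^sub>m (A::real mat))\<^sup>T = c \<cdot>\<^sub>m A\<^sup>T"
  by (intro eq_matI) auto

lemma single:
  assumes B: "B \<in> carrier_mat l m" and Z: "Z \<in> carrier_mat k l" and mu: "\<mu> \<ge> 0"
    and Mdef: "M = B * B\<^sup>T + \<mu> \<cdot>\<^sub>m (Z\<^sup>T * Z)" and inv: "invertible_mat M"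
    and x: "x \<in> carrier_vec l" and Bx: "B\<^sup>T *\<^sub>v x = ones_vec m"
    and Zx: "\<mu> > 0 \<longrightarrow> Z *\<^sub>v x = 0\<^sub>v k"
    and Qdef: "Q = B\<^sup>T * mat_inv M * B"
  shows "Q *\<^sub>v ones_vec m = ones_vec m \<and> Q\<^sup>T *\<^sub>v ones_vec m = ones_vec m"
proof -
  have Mc: "M \<in> carrier_mat l l" using B Z Mdef by auto
  note I = inv_props[OF Mc inv]
  have zt: "(\<mu> \<cdot>\<^sub>m (Z\<^sup>T * Z)) *\<^sub>v x = 0\<^sub>v l"
  proof (cases "\<mu> > 0")
    case True
    hence "Z *\<^sub>v x = 0\<^sub>v k" using Zx by auto
    moreover have "Z\<^sup>T *\<^sub>v 0\<^sub>v k = 0\<^sub>v l" using Z by (intro eq_vecI) auto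
    ultimately have "(Z\<^sup>T * Z) *\<^sub>v x = 0\<^sub>v l" using Z x by (simp add: assoc_mult_mat_vec[of _ l k _ l])
    have "(\<mu> \<cdot>\<^sub>m (Z\<^sup>T * Z)) *\<^sub>v x = \<mu> \<cdot>\<^sub>v ((Z\<^sup>T * Z) *\<^sub>v x)"
      using Z x by (intro eq_vecI) (auto simp: scalar_prod_def sum_distrib_left ac_simps intro: sum.swap)
    then show ?thesis using \<open>(Z\<^sup>T * Z) *\<^sub>v x = 0\<^sub>v l\<close> by (auto intro!: eq_vecI)
  next
    case False
    hence "\<mu> = 0" using mu by auto
    then show ?thesis using Z x by (intro eq_vecI) (auto simp: scalar_prod_def)
  qed
  have Mx: "M *\<^sub>v x = B *\<^sub>v ones_vec m"
  proof -
    have "M *\<^sub>v x = (B * B\<^sup>T) *\<^sub>v x + (\<mu> \<cdot>\<^sub>m (Z\<^sup>T * Z)) *\<^sub>v x"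
      unfolding Mdef using B Z x by (intro add_mult_distrib_mat_vec) auto
    also have "\<dots> = B *\<^sub>v ones_vec m" using zt B x Bx
      by (simp add: assoc_mult_mat_vec[of _ l m _ l] ones_vec_def)
    finally show ?thesis .
  qed
  have o: "ones_vec m \<in> carrier_vec m" by (simp add: ones_vec_def)
  have MS: "M\<^sup>T = M" unfolding Mdef using B Z
    by (simp add: transpose_add[of _ l l] transpose_mult[of _ l m] transpose_mult[of _ l k] transpose_smult_mat)
  have ix: "mat_inv M *\<^sub>v (B *\<^sub>v ones_vec m) = x"
    using I Mx x Mc by (metis assoc_mult_mat_vec one_mult_mat_vec)
  have ixT: "(mat_inv M)\<^sup>T *\<^sub>v (B *\<^sub>v ones_vec m) = x"
  proof -
    have "(mat_inv M)\<^sup>T * M = 1\<^sub>m l"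
      using I Mc MS by (metis transpose_mult transpose_one)
    then show ?thesis using I Mx x Mc by (metis assoc_mult_mat_vec one_mult_mat_vec transpose_carrier_mat)
  qed
  have "Q *\<^sub>v ones_vec m = ones_vec m"
  proof -
    have "Q *\<^sub>v ones_vec m = (B\<^sup>T * mat_inv M) *\<^sub>v (B *\<^sub>v ones_vec m)"
      unfolding Qdef using B I o by (intro assoc_mult_mat_vec[of _ m l _ m]) auto
    also have "\<dots> = B\<^sup>T *\<^sub>v (mat_inv M *\<^sub>v (B *\<^sub>v ones_vec m))"
      using B I o by (intro assoc_mult_mat_vec[of _ m l _ l]) auto
    finally show ?thesis using ix Bx by simp
  qed
  moreover have "Q\<^sup>T = B\<^sup>T * (mat_inv M)\<^sup>T * B"
  proof -
    have "Q\<^sup>T = B\<^sup>T * (B\<^sup>T * mat_inv M)\<^sup>T"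
      unfolding Qdef using B I by (subst transpose_mult[of _ m l _ m]) auto
    also have "(B\<^sup>T * mat_inv M)\<^sup>T = (mat_inv M)\<^sup>T * B"
      using B I by (subst transpose_mult[of _ m l _ l]) auto
    finally show ?thesis using B I by (simp add: assoc_mult_mat[of _ m l _ l _ m])
  qed
  moreover have "(B\<^sup>T * (mat_inv M)\<^sup>T * B) *\<^sub>v ones_vec m = ones_vec m"
  proof -
    have "(B\<^sup>T * (mat_inv M)\<^sup>T * B) *\<^sub>v ones_vec m = (B\<^sup>T * (mat_inv M)\<^sup>T) *\<^sub>v (B *\<^sub>v ones_vec m)"
      using B I o by (intro assoc_mult_mat_vec[of _ m l _ m]) auto
    also have "\<dots> = B\<^sup>T *\<^sub>v ((mat_inv M)\<^sup>T *\<^sub>v (B *\<^sub>v ones_vec m))"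
      using B I o by (intro assoc_mult_mat_vec[of _ m l _ l]) auto
    finally show ?thesis using ixT Bx by simp
  qed
  ultimately show ?thesis by simp
qed

lemma trace_part:
  fixes S P :: "real mat" and t :: "real vec"
  assumes S: "S \<in> carrier_mat d m" and t: "t \<in> carrier_vec d" and P: "P \<in> carrier_mat m m"
    and rowP: "\<And>r. r < m \<Longrightarrow> (\<Sum>c<m. P $$ (r, c)) = 0"
    and colP: "\<And>c. c < m \<Longrightarrow> (\<Sum>r<m. P $$ (r, c)) = 0"
  shows "(S + mat d m (\<lambda>(r, c). t $ r)) * P * (S + mat d m (\<lambda>(r, c). t $ r))\<^sup>T = S * P * S\<^sup>T"
proof -
  define T where "T = mat d m (\<lambda>(r, c). t $ r)"
  have Tc: "T \<in> carrier_mat d m" unfolding T_def by auto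
  have TP: "T * P = 0\<^sub>m d m"
  proof (rule eq_matI)
    fix i j assume ij: "i < dim_row (0\<^sub>m d m :: real mat)" "j < dim_col (0\<^sub>m d m :: real mat)"
    have "(T * P) $$ (i, j) = (\<Sum>r<m. t $ i * P $$ (r, j))"
      using ij P unfolding T_def by (auto simp: scalar_prod_def atLeast0LessThan)
    also have "\<dots> = t $ i * (\<Sum>r<m. P $$ (r, j))" by (simp add: sum_distrib_left)
    also have "\<dots> = 0" using colP ij by simp
    finally show "(T * P) $$ (i, j) = 0\<^sub>m d m $$ (i, j)" using ij by simp
  qed (use P Tc in auto)
  have PT: "P * T\<^sup>T = 0\<^sub>m m d"
  proof (rule eq_matI)
    fix i j assume ij: "i < dim_row (0\<^sub>m m d :: real mat)" "j < dim_col (0\<^sub>m m d :: real mat)"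
    have "(P * T\<^sup>T) $$ (i, j) = (\<Sum>c<m. P $$ (i, c) * t $ j)"
      using ij P unfolding T_def by (auto simp: scalar_prod_def atLeast0LessThan)
    also have "\<dots> = (\<Sum>c<m. P $$ (i, c)) * t $ j" by (simp add: sum_distrib_right)
    also have "\<dots> = 0" using rowP ij by simp
    finally show "(P * T\<^sup>T) $$ (i, j) = 0\<^sub>m m d $$ (i, j)" using ij by simp
  qed (use P Tc in auto)
  have "(S + T) * P = S * P + T * P" using S Tc P by (rule add_mult_distrib_mat)
  also have "\<dots> = S * P" using TP S P by simp
  finally have e1: "(S + T) * P = S * P" .
  have "(S + T)\<^sup>T = S\<^sup>T + T\<^sup>T" using S Tc by (rule transpose_add)
  hence "(S + T) * P * (S + T)\<^sup>T = S * P * (S\<^sup>T + T\<^sup>T)" using e1 by simp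
  also have "\<dots> = S * P * S\<^sup>T + S * P * T\<^sup>T"
    using S P Tc by (intro mult_add_distrib_mat[of _ d m]) auto
  also have "S * P * T\<^sup>T = S * (P * T\<^sup>T)" using S P Tc by (intro assoc_mult_mat[of _ d m _ m _ d]) auto
  also have "\<dots> = 0\<^sub>m d d" using PT S by simp
  also have "S * P * S\<^sup>T + 0\<^sub>m d d = S * P * S\<^sup>T" using S P by (intro right_add_zero_mat) auto
  finally show ?thesis unfolding T_def .
qed

theorem proposition4:
  fixes d m n :: nat
    and l k :: "nat \<Rightarrow> nat"
    and \<beta> :: "nat \<Rightarrow> real vec \<Rightarrow> real vec"
    and Z :: "nat \<Rightarrow> real mat"
    and \<mu> :: "nat \<Rightarrow> real"
    and D :: "nat \<Rightarrow> real mat"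
    and B M Q :: "nat \<Rightarrow> real mat"
    and QII PII :: "real mat"
  assumes beta_dim: "\<And>i p. i < n \<Longrightarrow> p \<in> carrier_vec d \<Longrightarrow> \<beta> i p \<in> carrier_vec (l i)"
    and Z_dim: "\<And>i. i < n \<Longrightarrow> Z i \<in> carrier_mat (k i) (l i)"
    and mu_nonneg: "\<And>i. i < n \<Longrightarrow> \<mu> i \<ge> 0"
    and D_dim: "\<And>i. i < n \<Longrightarrow> D i \<in> carrier_mat d m"
    and B_def: "\<And>i. B i = basis_mat (l i) (\<beta> i) (D i)"
    and M_def: "\<And>i. M i = B i * (B i)\<^sup>T + \<mu> i \<cdot>\<^sub>m ((Z i)\<^sup>T * Z i)"
    and M_inv: "\<And>i. i < n \<Longrightarrow> invertible_mat (M i)"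
    and free_trans: "\<And>i. i < n \<Longrightarrow> contains_free_translations d (l i) (k i) (\<beta> i) (Z i) (\<mu> i)"
    and Q_def: "\<And>i. Q i = (B i)\<^sup>T * mat_inv (M i) * B i"
    and QII_def: "QII = mat m m (\<lambda>(r, c). \<Sum>i<n. Q i $$ (r, c))"
    and PII_def: "PII = of_nat n \<cdot>\<^sub>m 1\<^sub>m m - QII"
  shows "PII *\<^sub>v ones_vec m = 0\<^sub>v m
    \<and> QII *\<^sub>v ones_vec m = of_nat n \<cdot>\<^sub>v ones_vec m
    \<and> (\<forall>i<n. Q i *\<^sub>v ones_vec m = ones_vec m)
    \<and> (\<forall>S \<in> carrier_mat d m. \<forall>t \<in> carrier_vec d.
         mat_trace ((S + mat d m (\<lambda>(r, c). t $ r)) * PII * (S + mat d m (\<lambda>(r, c). t $ r))\<^sup>T)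
           = mat_trace (S * PII * S\<^sup>T))
    \<and> (\<forall>i<n. \<exists>x \<in> carrier_vec (l i). (B i)\<^sup>T *\<^sub>v x = ones_vec m
         \<and> (\<mu> i > 0 \<longrightarrow> Z i *\<^sub>v x = 0\<^sub>v (k i)))"
proof -
  have Bc: "B i \<in> carrier_mat (l i) m" if "i < n" for i
    using D_dim[OF that] unfolding B_def basis_mat_def by auto
  have o: "ones_vec m \<in> carrier_vec m" by (simp add: ones_vec_def)
  have X: "\<exists>x \<in> carrier_vec (l i). (B i)\<^sup>T *\<^sub>v x = ones_vec m
         \<and> (\<mu> i > 0 \<longrightarrow> Z i *\<^sub>v x = 0\<^sub>v (k i))" if i: "i < n" for i
  proof -
    obtain x where x: "x \<in> carrier_vec (l i)" and bx: "\<And>p. p \<in> carrier_vec d \<Longrightarrow> \<beta> i p \<bullet> x = 1"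
      and zx: "\<mu> i > 0 \<longrightarrow> Z i *\<^sub>v x = 0\<^sub>v (k i)"
      using free_trans[OF i] unfolding contains_free_translations_def by blast
    have "(B i)\<^sup>T *\<^sub>v x = ones_vec m"
    proof (intro eq_vecI)
      fix c assume "c < dim_vec (ones_vec m)"
      hence c: "c < m" by (simp add: ones_vec_def)
      have cd: "col (D i) c \<in> carrier_vec d" using D_dim[OF i] c by auto
      have "col (B i) c = \<beta> i (col (D i) c)"
        using D_dim[OF i] c beta_dim[OF i cd] unfolding B_def basis_mat_def by (intro eq_vecI) auto
      then show "((B i)\<^sup>T *\<^sub>v x) $ c = ones_vec m $ c"
        using c Bc[OF i] bx[OF cd] by (simp add: ones_vec_def)
    qed (use Bc[OF i] in \<open>simp add: ones_vec_def\<close>)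
    then show ?thesis using x zx by blast
  qed
  have QQ: "Q i *\<^sub>v ones_vec m = ones_vec m \<and> (Q i)\<^sup>T *\<^sub>v ones_vec m = ones_vec m" if i: "i < n" for i
  proof -
    obtain x where "x \<in> carrier_vec (l i)" "(B i)\<^sup>T *\<^sub>v x = ones_vec m" "\<mu> i > 0 \<longrightarrow> Z i *\<^sub>v x = 0\<^sub>v (k i)"
      using X[OF i] by blast
    then show ?thesis
      using single[OF Bc[OF i] Z_dim[OF i] mu_nonneg[OF i] M_def M_inv[OF i]] Q_def by blast
  qed
  have Qc: "Q i \<in> carrier_mat m m" if i: "i < n" for i
    using Bc[OF i] unfolding Q_def mat_inv_def by auto
  have rowQ: "(\<Sum>c<m. Q i $$ (r, c)) = 1" if i: "i < n" and r: "r < m" for i r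
  proof -
    have "(Q i *\<^sub>v ones_vec m) $ r = 1" using QQ[OF i] r by (simp add: ones_vec_def)
    then show ?thesis using Qc[OF i] r by (simp add: ones_vec_def scalar_prod_def atLeast0LessThan)
  qed
  have colQ: "(\<Sum>r<m. Q i $$ (r, c)) = 1" if i: "i < n" and c: "c < m" for i c
  proof -
    have "((Q i)\<^sup>T *\<^sub>v ones_vec m) $ c = 1" using QQ[OF i] c by (simp add: ones_vec_def)
    then show ?thesis using Qc[OF i] c by (simp add: ones_vec_def scalar_prod_def atLeast0LessThan)
  qed
  have QIIc: "QII \<in> carrier_mat m m" unfolding QII_def by auto
  have PIIc: "PII \<in> carrier_mat m m" unfolding PII_def QII_def by auto
  have rowQII: "(\<Sum>c<m. QII $$ (r, c)) = of_nat n" if r: "r < m" for r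
  proof -
    have "(\<Sum>c<m. QII $$ (r, c)) = (\<Sum>c<m. \<Sum>i<n. Q i $$ (r, c))" using r unfolding QII_def by simp
    also have "\<dots> = (\<Sum>i<n. \<Sum>c<m. Q i $$ (r, c))" by (rule sum.swap)
    also have "\<dots> = (\<Sum>i<n. 1)" using rowQ r by simp
    finally show ?thesis by simp
  qed
  have colQII: "(\<Sum>r<m. QII $$ (r, c)) = of_nat n" if c: "c < m" for c
  proof -
    have "(\<Sum>r<m. QII $$ (r, c)) = (\<Sum>r<m. \<Sum>i<n. Q i $$ (r, c))" using c unfolding QII_def by simp
    also have "\<dots> = (\<Sum>i<n. \<Sum>r<m. Q i $$ (r, c))" by (rule sum.swap)
    also have "\<dots> = (\<Sum>i<n. 1)" using colQ c by simp
    finally show ?thesis by simp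
  qed
  have Pent: "PII $$ (r, c) = (if r = c then of_nat n else 0) - QII $$ (r, c)" if "r < m" "c < m" for r c
    using that unfolding PII_def QII_def by auto
  have rowP: "(\<Sum>c<m. PII $$ (r, c)) = 0" if r: "r < m" for r
  proof -
    have "(\<Sum>c<m. PII $$ (r, c)) = (\<Sum>c<m. (if r = c then of_nat n else 0)) - (\<Sum>c<m. QII $$ (r, c))"
      using Pent r by (simp add: sum_subtractf)
    also have "\<dots> = 0" using rowQII[OF r] r by simp
    finally show ?thesis .
  qed
  have colP: "(\<Sum>r<m. PII $$ (r, c)) = 0" if c: "c < m" for c
  proof -
    have "(\<Sum>r<m. PII $$ (r, c)) = (\<Sum>r<m. (if r = c then of_nat n else 0)) - (\<Sum>r<m. QII $$ (r, c))"
      using Pent c by (simp add: sum_subtractf)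
    also have "\<dots> = 0" using colQII[OF c] c by simp
    finally show ?thesis .
  qed
  have g1: "PII *\<^sub>v ones_vec m = 0\<^sub>v m"
    using PIIc rowP by (intro eq_vecI) (auto simp: ones_vec_def scalar_prod_def atLeast0LessThan)
  have g2: "QII *\<^sub>v ones_vec m = of_nat n \<cdot>\<^sub>v ones_vec m"
    using QIIc rowQII by (intro eq_vecI) (auto simp: ones_vec_def scalar_prod_def atLeast0LessThan)
  have g4: "\<forall>S \<in> carrier_mat d m. \<forall>t \<in> carrier_vec d.
         mat_trace ((S + mat d m (\<lambda>(r, c). t $ r)) * PII * (S + mat d m (\<lambda>(r, c). t $ r))\<^sup>T)
           = mat_trace (S * PII * S\<^sup>T)"
    using trace_part[OF _ _ PIIc rowP colP] by simp
  show ?thesis using g1 g2 g4 QQ X by blast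
qed

end
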